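(* Let $m\ge 2$ and $n\ge 1$ be integers and let $\mathcal P=(p_{i_1 i_2\dots i_m})\in\mathbb R^{[m,n]}$ be a transition probability tensor, i.e. $p_{i_1 i_2\dots i_m}\ge 0$ for all indices and $\sum_{i_1=1}^n p_{i_1 i_2\dots i_m}=1$ for all $(i_2,\dots,i_m)$. Let $R\in\mathbb R^{n\times n^{m-1}}$ be the flattening of $\mathcal P$ along the first index, and let $\mathbf{x}\in\mathbb R^n$ be a non-negative vector with $e^T\mathbf{x}\le 1$, where $e=(1,\dots,1)^T\in\mathbb R^n$. Let $\alpha\ge 0$. Then the $n\times n$ matrix $$-J(\mathbf{x}) = I-\alpha R\Big(I\otimes \mathbf{x}\otimes\cdots\otimes\mathbf{x}+\mathbf{x}\otimes I\otimes\mathbf{x}\otimes\cdots\otimes\mathbf{x}+\cdots+\mathbf{x}\otimes\cdots\otimes\mathbf{x}\otimes I\Big)$$ is non-singular whenever $\alpha<\frac{1}{m-1}$.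
   Context: $I$ denotes the $n\times n$ identity matrix and $\otimes$ the Kronecker product. Each summand inside the parentheses is a Kronecker product of $m-1$ factors, exactly one of which is $I$ and the remaining $m-2$ of which are $\mathbf{x}$ (viewed as an $n\times 1$ matrix); there are $m-1$ summands, one for each position of $I$, so each summand is an $n^{m-1}\times n$ matrix. The flattening $R$ along the first index is the $n\times n^{m-1}$ matrix whose column indexing is compatible with the Kronecker product, i.e. for all $y^{(2)},\dots,y^{(m)}\in\mathbb R^n$, $\big(R(y^{(2)}\otimes\cdots\otimes y^{(m)})\big)_i=\sum_{i_2,\dots,i_m=1}^n p_{i i_2\dots i_m}\,y^{(2)}_{i_2}\cdots y^{(m)}_{i_m}$. *)

theory Defs
  imports "Jordan_Normal_Form.Matrix"
begin

text \<open>Kronecker product of matrices (row/column indices: first factor most significant).\<close>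
definition kron :: "real mat \<Rightarrow> real mat \<Rightarrow> real mat" where
  "kron A B = mat (dim_row A * dim_row B) (dim_col A * dim_col B)
     (\<lambda>(i,j). A $$ (i div dim_row B, j div dim_col B) * B $$ (i mod dim_row B, j mod dim_col B))"

fun kron_list :: "real mat list \<Rightarrow> real mat" where
  "kron_list [] = 1\<^sub>m 1"
| "kron_list (A # As) = kron A (kron_list As)"

definition col_mat :: "real vec \<Rightarrow> real mat" where
  "col_mat x = mat (dim_vec x) 1 (\<lambda>(i,j). x $ i)"

text \<open>Base-n digits of j, k digits, most significant first
  (compatible with the index ordering of kron).\<close>
fun digits :: "nat \<Rightarrow> nat \<Rightarrow> nat \<Rightarrow> nat list" where
  "digits n 0 j = []"
| "digits n (Suc k) j = (j div n ^ k) mod n # digits n k (j mod n ^ k)"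

text \<open>Order-m, dimension-n tensor given as a function of its index list [i1,...,im]
  (indices 0-based). Flattening along the first index: n x n^(m-1) matrix.\<close>
definition flattening :: "nat \<Rightarrow> nat \<Rightarrow> (nat list \<Rightarrow> real) \<Rightarrow> real mat" where
  "flattening m n P = mat n (n ^ (m - 1)) (\<lambda>(i,j). P (i # digits n (m - 1) j))"

definition transition_probability_tensor :: "nat \<Rightarrow> nat \<Rightarrow> (nat list \<Rightarrow> real) \<Rightarrow> bool" where
  "transition_probability_tensor m n P \<longleftrightarrow>
     (\<forall>is. length is = m \<and> set is \<subseteq> {..<n} \<longrightarrow> P is \<ge> 0) \<and>
     (\<forall>is. length is = m - 1 \<and> set is \<subseteq> {..<n} \<longrightarrow> (\<Sum>i<n. P (i # is)) = 1)"

definition kron_sum :: "nat \<Rightarrow> nat \<Rightarrow> real vec \<Rightarrow> real mat" where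
  "kron_sum m n x = foldr (+)
     (map (\<lambda>k. kron_list (map (\<lambda>l. if l = k then 1\<^sub>m n else col_mat x) [0..<m - 1])) [0..<m - 1])
     (0\<^sub>m (n ^ (m - 1)) n)"

definition minus_J :: "nat \<Rightarrow> nat \<Rightarrow> (nat list \<Rightarrow> real) \<Rightarrow> real \<Rightarrow> real vec \<Rightarrow> real mat" where
  "minus_J m n P \<alpha> x = 1\<^sub>m n - \<alpha> \<cdot>\<^sub>m (flattening m n P * kron_sum m n x)"

end

theory Submission
  imports Defs "Jordan_Normal_Form.Determinant"
begin


lemma inv_from_kernel:
  fixes A :: "real mat"
  assumes A: "A \<in> carrier_mat n n"
    and k: "\<And>v. v \<in> carrier_vec n \<Longrightarrow> A *\<^sub>v v = 0\<^sub>v n \<Longrightarrow> v = 0\<^sub>v n"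
  shows "invertible_mat A"
proof -
  have "det A \<noteq> 0" using det_0_iff_vec_prod_zero[OF A] k by auto
  from det_non_zero_imp_unit[OF A this, of "()"]
  obtain B where B: "B \<in> carrier_mat n n" "B * A = 1\<^sub>m n" "A * B = 1\<^sub>m n"
    unfolding Units_def ring_mat_def by auto
  show ?thesis unfolding invertible_mat_def inverts_mat_def square_mat.simps
    using A B by (intro conjI exI[of _ B]) auto
qed



lemma kernel_trivial:
  fixes M :: "real mat"
  assumes M: "M \<in> carrier_mat n n"
    and nn: "\<And>i j. i < n \<Longrightarrow> j < n \<Longrightarrow> M $$ (i,j) \<ge> 0"
    and cs: "\<And>j. j < n \<Longrightarrow> (\<Sum>i<n. M $$ (i,j)) \<le> c"
    and a: "\<alpha> \<ge> 0" "\<alpha> * c < 1"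
    and v: "v \<in> carrier_vec n" and z: "(1\<^sub>m n - \<alpha> \<cdot>\<^sub>m M) *\<^sub>v v = 0\<^sub>v n"
  shows "v = 0\<^sub>v n"
proof -
  have eq: "v $ i = \<alpha> * (\<Sum>j<n. M $$ (i,j) * v $ j)" if i: "i < n" for i
  proof -
    have "0 = ((1\<^sub>m n - \<alpha> \<cdot>\<^sub>m M) *\<^sub>v v) $ i" using z i by simp
    also have "\<dots> = (\<Sum>j<n. ((if i = j then 1 else 0) - \<alpha> * M $$ (i,j)) * v $ j)"
      using M v i by (simp add: scalar_prod_def lessThan_atLeast0)
    also have "\<dots> = (\<Sum>j<n. (if i = j then v $ j else 0)) - \<alpha> * (\<Sum>j<n. M $$ (i,j) * v $ j)"
    proof -
      have "(\<Sum>j<n. ((if i = j then 1 else 0) - \<alpha> * M $$ (i,j)) * v $ j)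
        = (\<Sum>j<n. (if i = j then v $ j else 0) - \<alpha> * (M $$ (i,j) * v $ j))"
        by (rule sum.cong) (auto simp: algebra_simps)
      also have "\<dots> = (\<Sum>j<n. (if i = j then v $ j else 0)) - \<alpha> * (\<Sum>j<n. M $$ (i,j) * v $ j)"
        by (simp add: sum_subtractf sum_distrib_left)
      finally show ?thesis .
    qed
    also have "\<dots> = v $ i - \<alpha> * (\<Sum>j<n. M $$ (i,j) * v $ j)" using i by simp
    finally show ?thesis by simp
  qed
  define S where "S = (\<Sum>i<n. \<bar>v $ i\<bar>)"
  have "S \<le> (\<Sum>i<n. \<alpha> * (\<Sum>j<n. M $$ (i,j) * \<bar>v $ j\<bar>))"
    unfolding S_def
  proof (rule sum_mono)
    fix i assume "i \<in> {..<n}"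
    hence i: "i < n" by simp
    have "\<bar>v $ i\<bar> = \<alpha> * \<bar>\<Sum>j<n. M $$ (i,j) * v $ j\<bar>" using eq[OF i] a by (simp add: abs_mult)
    also have "\<dots> \<le> \<alpha> * (\<Sum>j<n. \<bar>M $$ (i,j) * v $ j\<bar>)"
      using a by (intro mult_left_mono sum_abs) auto
    also have "\<dots> = \<alpha> * (\<Sum>j<n. M $$ (i,j) * \<bar>v $ j\<bar>)"
      using nn[OF i] by (simp add: abs_mult)
    finally show "\<bar>v $ i\<bar> \<le> \<alpha> * (\<Sum>j<n. M $$ (i,j) * \<bar>v $ j\<bar>)" .
  qed
  also have "\<dots> = \<alpha> * (\<Sum>j<n. (\<Sum>i<n. M $$ (i,j)) * \<bar>v $ j\<bar>)"
  proof -
    have "(\<Sum>i<n. \<alpha> * (\<Sum>j<n. M $$ (i,j) * \<bar>v $ j\<bar>)) = \<alpha> * (\<Sum>i<n. \<Sum>j<n. M $$ (i,j) * \<bar>v $ j\<bar>)"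
      by (simp add: sum_distrib_left)
    also have "(\<Sum>i<n. \<Sum>j<n. M $$ (i,j) * \<bar>v $ j\<bar>) = (\<Sum>j<n. \<Sum>i<n. M $$ (i,j) * \<bar>v $ j\<bar>)"
      by (rule sum.swap)
    also have "\<dots> = (\<Sum>j<n. (\<Sum>i<n. M $$ (i,j)) * \<bar>v $ j\<bar>)"
      by (simp add: sum_distrib_right)
    finally show ?thesis .
  qed
  also have "\<dots> \<le> \<alpha> * (\<Sum>j<n. c * \<bar>v $ j\<bar>)"
    using a cs by (intro mult_left_mono sum_mono mult_right_mono) auto
  also have "\<dots> = (\<alpha> * c) * S" by (simp add: S_def sum_distrib_left mult.assoc)
  finally have "S \<le> (\<alpha> * c) * S" .
  moreover have "S \<ge> 0" by (simp add: S_def sum_nonneg)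
  ultimately have "S = 0" using a
    by (smt (verit, best) mult_le_cancel_right1)
  hence "\<forall>i<n. v $ i = 0" unfolding S_def by (simp add: sum_nonneg_eq_0_iff)
  thus ?thesis using v by (intro eq_vecI) auto
qed



definition Q :: "real mat \<Rightarrow> bool" where
  "Q A \<longleftrightarrow> (\<forall>i<dim_row A. \<forall>j<dim_col A. 0 \<le> A $$ (i,j)) \<and>
     (\<forall>j<dim_col A. (\<Sum>i<dim_row A. A $$ (i,j)) \<le> 1)"

lemma sum_div_mod:
  fixes f g :: "nat \<Rightarrow> real"
  shows "(\<Sum>i<a*b. f (i div b) * g (i mod b)) = (\<Sum>i<a. f i) * (\<Sum>k<b. g k)"
proof (cases "b = 0")
  case True then show ?thesis by simp
next
  case False
  have bij: "bij_betw (\<lambda>i. (i div b, i mod b)) {..<a*b} ({..<a} \<times> {..<b})"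
  proof (rule bij_betwI[where g = "\<lambda>(q,r). q * b + r"])
    show "(\<lambda>i. (i div b, i mod b)) \<in> {..<a * b} \<rightarrow> {..<a} \<times> {..<b}"
      using False by (auto simp: less_mult_imp_div_less)
    show "(\<lambda>(q, r). q * b + r) \<in> {..<a} \<times> {..<b} \<rightarrow> {..<a * b}"
    proof
      fix p assume "p \<in> {..<a} \<times> {..<b}"
      then obtain q r where p: "p = (q,r)" "q < a" "r < b" by auto
      have "q * b + r < q * b + b" using p by simp
      also have "\<dots> = Suc q * b" by simp
      also have "\<dots> \<le> a * b" using p by (intro mult_right_mono) auto
      finally show "(case p of (q, r) \<Rightarrow> q * b + r) \<in> {..<a * b}" using p by simp
    qed
  qed (auto simp: False)
  have "(\<Sum>i<a*b. f (i div b) * g (i mod b)) = (\<Sum>p\<in>{..<a} \<times> {..<b}. f (fst p) * g (snd p))"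
    using sum.reindex_bij_betw[OF bij, of "\<lambda>p. f (fst p) * g (snd p)"] by simp
  also have "\<dots> = (\<Sum>i<a. f i) * (\<Sum>k<b. g k)"
    by (simp add: sum_product sum.cartesian_product case_prod_beta)
  finally show ?thesis .
qed

lemma Q_kron: assumes "Q A" "Q B" shows "Q (kron A B)"
proof -
  let ?rA = "dim_row A" and ?rB = "dim_row B" and ?cA = "dim_col A" and ?cB = "dim_col B"
  have ent: "kron A B $$ (i,j) = A $$ (i div ?rB, j div ?cB) * B $$ (i mod ?rB, j mod ?cB)"
    if "i < ?rA * ?rB" "j < ?cA * ?cB" for i j
    using that by (simp add: kron_def)
  have idx: "i div ?rB < ?rA" "i mod ?rB < ?rB" if "i < ?rA * ?rB" for i
    using that by (auto simp: less_mult_imp_div_less) (metis mod_less_divisor mult_0_right not_gr_zero not_less0)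
  have jdx: "j div ?cB < ?cA" "j mod ?cB < ?cB" if "j < ?cA * ?cB" for j
    using that by (auto simp: less_mult_imp_div_less) (metis mod_less_divisor mult_0_right not_gr_zero not_less0)
  have A: "\<And>i j. i < ?rA \<Longrightarrow> j < ?cA \<Longrightarrow> 0 \<le> A $$ (i,j)" "\<And>j. j < ?cA \<Longrightarrow> (\<Sum>i<?rA. A $$ (i,j)) \<le> 1"
    using assms(1) unfolding Q_def by auto
  have B: "\<And>i j. i < ?rB \<Longrightarrow> j < ?cB \<Longrightarrow> 0 \<le> B $$ (i,j)" "\<And>j. j < ?cB \<Longrightarrow> (\<Sum>i<?rB. B $$ (i,j)) \<le> 1"
    using assms(2) unfolding Q_def by auto
  have dims: "dim_row (kron A B) = ?rA * ?rB" "dim_col (kron A B) = ?cA * ?cB"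
    by (simp_all add: kron_def)
  show ?thesis unfolding Q_def dims
  proof (intro conjI allI impI)
    fix i j assume i: "i < ?rA * ?rB" and j: "j < ?cA * ?cB"
    show "0 \<le> kron A B $$ (i,j)" unfolding ent[OF i j]
      using A(1)[OF idx(1)[OF i] jdx(1)[OF j]] B(1)[OF idx(2)[OF i] jdx(2)[OF j]] by simp
  next
    fix j assume j: "j < ?cA * ?cB"
    have "(\<Sum>i<?rA * ?rB. kron A B $$ (i,j)) =
      (\<Sum>i<?rA * ?rB. A $$ (i div ?rB, j div ?cB) * B $$ (i mod ?rB, j mod ?cB))"
      using ent j by (intro sum.cong) auto
    also have "\<dots> = (\<Sum>i<?rA. A $$ (i, j div ?cB)) * (\<Sum>k<?rB. B $$ (k, j mod ?cB))"
      by (rule sum_div_mod)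
    also have "\<dots> \<le> 1"
      using A B jdx[OF j] by (intro mult_le_one sum_nonneg) auto
    finally show "(\<Sum>i<?rA * ?rB. kron A B $$ (i,j)) \<le> 1" .
  qed
qed

lemma kron_list_dims:
  "dim_row (kron_list As) = prod_list (map dim_row As)"
  "dim_col (kron_list As) = prod_list (map dim_col As)"
  by (induction As) (auto simp: kron_def)

lemma Q_kron_list: "(\<And>A. A \<in> set As \<Longrightarrow> Q A) \<Longrightarrow> Q (kron_list As)"
proof (induction As)
  case Nil
  show ?case by (simp add: Q_def)
next
  case (Cons A As)
  then show ?case by (simp add: Q_kron)
qed

lemma Q_one: "Q (1\<^sub>m n)"
proof -
  have "(\<Sum>i<n. 1\<^sub>m n $$ (i,j)) = 1" if "j < n" for j
  proof -
    have "(\<Sum>i<n. 1\<^sub>m n $$ (i,j)) = (\<Sum>i<n. if i = j then 1 else 0)"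
      using that by (intro sum.cong) auto
    thus ?thesis using that by simp
  qed
  thus ?thesis unfolding Q_def by auto
qed

lemma Q_col: assumes "x \<in> carrier_vec n" "\<forall>i<n. x $ i \<ge> 0" "(\<Sum>i<n. x $ i) \<le> 1"
  shows "Q (col_mat x)"
  using assms unfolding Q_def col_mat_def by auto

lemma prod_list_if: "prod_list (map (\<lambda>l. if l = k then (n::nat) else 1) [0..<N]) = (if k < N then n else 1)"
  by (induction N) auto

lemma foldr_sum:
  assumes "\<And>A. A \<in> set Ls \<Longrightarrow> A \<in> carrier_mat r c \<and> Q A"
  shows "foldr (+) Ls (0\<^sub>m r c) \<in> carrier_mat r c \<and>
    (\<forall>i<r. \<forall>j<c. 0 \<le> foldr (+) Ls (0\<^sub>m r c) $$ (i,j)) \<and>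
    (\<forall>j<c. (\<Sum>i<r. foldr (+) Ls (0\<^sub>m r c) $$ (i,j)) \<le> real (length Ls))"
  using assms
proof (induction Ls)
  case Nil
  then show ?case by simp
next
  case (Cons A Ls)
  hence IH: "foldr (+) Ls (0\<^sub>m r c) \<in> carrier_mat r c"
    "\<forall>i<r. \<forall>j<c. 0 \<le> foldr (+) Ls (0\<^sub>m r c) $$ (i,j)"
    "\<forall>j<c. (\<Sum>i<r. foldr (+) Ls (0\<^sub>m r c) $$ (i,j)) \<le> real (length Ls)" by auto
  have A: "A \<in> carrier_mat r c" "Q A" using Cons.prems by auto
  hence A': "\<forall>i<r. \<forall>j<c. 0 \<le> A $$ (i,j)" "\<forall>j<c. (\<Sum>i<r. A $$ (i,j)) \<le> 1"
    unfolding Q_def by auto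
  have ent: "(A + foldr (+) Ls (0\<^sub>m r c)) $$ (i,j) = A $$ (i,j) + foldr (+) Ls (0\<^sub>m r c) $$ (i,j)"
    if "i < r" "j < c" for i j using that A IH by simp
  show ?case
  proof (intro conjI allI impI)
    show "foldr (+) (A # Ls) (0\<^sub>m r c) \<in> carrier_mat r c" using A IH by simp
  next
    fix i j assume "i < r" "j < c"
    then show "0 \<le> foldr (+) (A # Ls) (0\<^sub>m r c) $$ (i,j)" using ent A' IH by simp
  next
    fix j assume j: "j < c"
    have "(\<Sum>i<r. foldr (+) (A # Ls) (0\<^sub>m r c) $$ (i,j)) =
       (\<Sum>i<r. A $$ (i,j)) + (\<Sum>i<r. foldr (+) Ls (0\<^sub>m r c) $$ (i,j))"
      using ent j by (simp add: sum.distrib)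
    also have "\<dots> \<le> 1 + real (length Ls)" using A' IH j by (intro add_mono) auto
    finally show "(\<Sum>i<r. foldr (+) (A # Ls) (0\<^sub>m r c) $$ (i,j)) \<le> real (length (A # Ls))" by simp
  qed
qed



lemma digits_len: "length (digits n k j) = k"
  by (induction k arbitrary: j) auto

lemma digits_set: "n \<ge> 1 \<Longrightarrow> set (digits n k j) \<subseteq> {..<n}"
  by (induction k arbitrary: j) auto

theorem proposition3p1:
  fixes m n :: nat and P :: "nat list \<Rightarrow> real" and x :: "real vec" and \<alpha> :: real
  assumes "m \<ge> 2" and "n \<ge> 1"
    and "transition_probability_tensor m n P"
    and "x \<in> carrier_vec n" and "\<forall>i<n. x $ i \<ge> 0" and "(\<Sum>i<n. x $ i) \<le> 1"
    and "\<alpha> \<ge> 0" and "\<alpha> < 1 / real (m - 1)"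
  shows "invertible_mat (minus_J m n P \<alpha> x)"
proof -
  define N where "N = m - 1"
  have N1: "N \<ge> 1" using assms(1) by (simp add: N_def)
  define R where "R = flattening m n P"
  have R: "R \<in> carrier_mat n (n ^ N)" by (simp add: R_def flattening_def N_def)
  have Rent: "R $$ (i,k) = P (i # digits n N k)" if "i < n" "k < n ^ N" for i k
    using that by (simp add: R_def flattening_def N_def)
  have dig: "length (digits n N k) = m - 1" "set (digits n N k) \<subseteq> {..<n}" for k
    using digits_len digits_set[OF assms(2)] by (auto simp: N_def)
  have Rnn: "R $$ (i,k) \<ge> 0" if "i < n" "k < n ^ N" for i k
    using assms(3) dig[of k] that assms(1) unfolding Rent[OF that] transition_probability_tensor_def
    by auto
  have Rcs: "(\<Sum>i<n. R $$ (i,k)) = 1" if "k < n ^ N" for k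
    using assms(3) dig[of k] that Rent unfolding transition_probability_tensor_def
    by auto
  define Ls where "Ls = map (\<lambda>k. kron_list (map (\<lambda>l. if l = k then 1\<^sub>m n else col_mat x) [0..<N])) [0..<N]"
  have K_def': "kron_sum m n x = foldr (+) Ls (0\<^sub>m (n ^ N) n)"
    by (simp add: kron_sum_def Ls_def N_def)
  have Ls: "A \<in> carrier_mat (n ^ N) n \<and> Q A" if "A \<in> set Ls" for A
  proof -
    from that obtain k where k: "k < N" and A: "A = kron_list (map (\<lambda>l. if l = k then 1\<^sub>m n else col_mat x) [0..<N])"
      by (auto simp: Ls_def)
    have "dim_row A = prod_list (map (\<lambda>l. n) [0..<N])"
      unfolding A kron_list_dims map_map
      by (intro arg_cong[where f = prod_list] map_cong) (use assms(4) in \<open>auto simp: col_mat_def\<close>)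
    also have "\<dots> = n ^ N" by (simp add: map_replicate_const)
    finally have r: "dim_row A = n ^ N" .
    have "dim_col A = prod_list (map (\<lambda>l. if l = k then n else 1) [0..<N])"
      unfolding A kron_list_dims map_map
      by (intro arg_cong[where f = prod_list] map_cong) (auto simp: col_mat_def)
    also have "\<dots> = n" using k by (simp add: prod_list_if)
    finally have c: "dim_col A = n" .
    have "Q A" unfolding A
      by (rule Q_kron_list) (auto simp: Q_one Q_col[OF assms(4-6)])
    with r c show ?thesis by auto
  qed
  define K where "K = kron_sum m n x"
  have KK: "K \<in> carrier_mat (n ^ N) n"
    "\<forall>i<n ^ N. \<forall>j<n. 0 \<le> K $$ (i,j)"
    "\<forall>j<n. (\<Sum>i<n ^ N. K $$ (i,j)) \<le> real N"
    using foldr_sum[of Ls "n ^ N" n, OF Ls] unfolding K_def K_def' by (auto simp: Ls_def)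
  define M where "M = R * K"
  have M: "M \<in> carrier_mat n n" using R KK by (simp add: M_def)
  have Ment: "M $$ (i,j) = (\<Sum>k<n ^ N. R $$ (i,k) * K $$ (k,j))" if "i < n" "j < n" for i j
    using that R KK(1) by (simp add: M_def scalar_prod_def lessThan_atLeast0)
  have Mnn: "M $$ (i,j) \<ge> 0" if "i < n" "j < n" for i j
    unfolding Ment[OF that] using Rnn KK(2) that by (intro sum_nonneg mult_nonneg_nonneg) auto
  have Mcs: "(\<Sum>i<n. M $$ (i,j)) \<le> real N" if j: "j < n" for j
  proof -
    have "(\<Sum>i<n. M $$ (i,j)) = (\<Sum>i<n. \<Sum>k<n ^ N. R $$ (i,k) * K $$ (k,j))"
      using Ment j by simp
    also have "\<dots> = (\<Sum>k<n ^ N. \<Sum>i<n. R $$ (i,k) * K $$ (k,j))" by (rule sum.swap)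
    also have "\<dots> = (\<Sum>k<n ^ N. (\<Sum>i<n. R $$ (i,k)) * K $$ (k,j))" by (simp add: sum_distrib_right)
    also have "\<dots> = (\<Sum>k<n ^ N. K $$ (k,j))" using Rcs by simp
    also have "\<dots> \<le> real N" using KK(3) j by simp
    finally show ?thesis .
  qed
  have aN: "\<alpha> * real N < 1" using assms(8) N1 by (simp add: N_def field_simps)
  have mJ: "minus_J m n P \<alpha> x = 1\<^sub>m n - \<alpha> \<cdot>\<^sub>m M"
    by (simp add: minus_J_def M_def R_def K_def)
  show ?thesis unfolding mJ
  proof (rule inv_from_kernel)
    show "1\<^sub>m n - \<alpha> \<cdot>\<^sub>m M \<in> carrier_mat n n" using M by (intro minus_carrier_mat) auto
    show "v = 0\<^sub>v n" if "v \<in> carrier_vec n" "(1\<^sub>m n - \<alpha> \<cdot>\<^sub>m M) *\<^sub>v v = 0\<^sub>v n" for v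
      by (rule kernel_trivial[OF M Mnn Mcs assms(7) aN that])
  qed
qed

end
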